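(* Let $\mathbf{A}\in\mathbb{Z}^{m\times n}$ have at least one nonzero entry in every row and column, and let $\mathbf{A}^{Z}=\begin{pmatrix}\mathbf{A} & -\mathbf{A}\mathbf{1}\end{pmatrix}\in\mathbb{Z}^{m\times(n+1)}$, where $\mathbf{1}\in\mathbb{R}^n$ is the all-ones vector. Then there is an absolute constant $C$ such that $\kappa(\mathbf{A}^{Z})\le C\,n^{3/2}\,\kappa(\mathbf{A})$.
   Context: For a nonzero matrix $\mathbf{M}$, $\kappa(\mathbf{M})=\sigma_{\max}(\mathbf{M})/\sigma_{\min}(\mathbf{M})$, where $\sigma_{\max}$ is the largest singular value and $\sigma_{\min}$ the smallest nonzero singular value. *)

theory Defs
  imports "Jordan_Normal_Form.Char_Poly"
begin

definition pos_singular_values :: "real mat \<Rightarrow> real set" where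
  "pos_singular_values M = {s. s > 0 \<and> eigenvalue (transpose_mat M * M) (s^2)}"

definition cond_num :: "real mat \<Rightarrow> real" where
  "cond_num M = Max (pos_singular_values M) / Min (pos_singular_values M)"

definition AZ :: "int mat \<Rightarrow> int mat" where
  "AZ A = mat (dim_row A) (dim_col A + 1)
     (\<lambda>(i,j). if j < dim_col A then A $$ (i,j) else - (\<Sum>k<dim_col A. A $$ (i,k)))"

end

theory Submission
  imports Defs "HOL-Analysis.Function_Topology"
begin


lemma compact_box: "compact {g :: nat \<Rightarrow> real. \<forall>i. g i \<in> (if i < n then {-1..1} else {0})}"
proof -
  have e: "{g :: nat \<Rightarrow> real. \<forall>i. g i \<in> (if i < n then {-1..1} else {0})} = PiE UNIV (\<lambda>i. if i < n then {-1..1} else {0})"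
    by (auto simp: PiE_def Pi_def extensional_def)
  have "compactin (product_topology (\<lambda>_. euclideanreal) UNIV) (PiE UNIV (\<lambda>i. if i < n then {-1..1::real} else {0}))"
    by (subst compactin_PiE) (auto simp: compactin_euclidean_iff)
  then show ?thesis unfolding e euclidean_product_topology compactin_euclidean_iff .
qed

lemma sprod_self: "x \<in> carrier_vec n \<Longrightarrow> x \<bullet> x = (\<Sum>i<n. x$i * x$i)"
  by (auto simp: scalar_prod_def lessThan_atLeast0)

lemma sprod_self_nonneg: "(x::real vec) \<bullet> x \<ge> 0"
  by (auto simp: scalar_prod_def intro: sum_nonneg)

lemma comp_le_norm: "x \<in> carrier_vec n \<Longrightarrow> i < n \<Longrightarrow> x$i * x$i \<le> (x::real vec) \<bullet> x"
  by (simp add: sprod_self, rule member_le_sum, auto)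

lemma sprod_self_0: "x \<in> carrier_vec n \<Longrightarrow> (x::real vec) \<bullet> x = 0 \<Longrightarrow> x = 0\<^sub>v n"
proof -
  assume x: "x \<in> carrier_vec n" and z: "x \<bullet> x = 0"
  then have "\<forall>i\<in>{..<n}. x$i * x$i = 0" by (subst sum_nonneg_eq_0_iff[symmetric]) (auto simp: sprod_self)
  then show ?thesis using x by (auto intro!: eq_vecI)
qed

lemma exists_orth:
  fixes us :: "nat \<Rightarrow> real vec"
  assumes k: "k < n" and us: "\<forall>i<k. us i \<in> carrier_vec n"
  shows "\<exists>x \<in> carrier_vec n. x \<noteq> 0\<^sub>v n \<and> (\<forall>i<k. us i \<bullet> x = 0)"
proof -
  define U where "U = mat n n (\<lambda>(i,j). if i < k then us i $ j else 0)"
  have U: "U \<in> carrier_mat n n" unfolding U_def by auto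
  have "det U = 0"
  proof -
    have "U = mat\<^sub>r n n (\<lambda>i. if i = k then 0\<^sub>v n else row U i)"
      unfolding U_def by (auto intro!: eq_matI simp: k)
    also have "det \<dots> = 0" by (rule det_row_0[OF k]) (auto simp: U_def)
    finally show ?thesis .
  qed
  then obtain v where v: "v \<in> carrier_vec n" "v \<noteq> 0\<^sub>v n" "U *\<^sub>v v = 0\<^sub>v n"
    using det_0_iff_vec_prod_zero[OF U] by auto
  have "\<forall>i<k. us i \<bullet> v = 0"
  proof (intro allI impI)
    fix i assume i: "i < k"
    have "(U *\<^sub>v v) $ i = 0" using v i k by auto
    moreover have "(U *\<^sub>v v) $ i = row U i \<bullet> v" using i k U by auto
    moreover have "row U i = us i" using i k us by (auto simp: U_def intro!: eq_vecI)
    ultimately show "us i \<bullet> v = 0" by simp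
  qed
  with v show ?thesis by auto
qed

lemma quad_expand:
  fixes P :: "real mat"
  assumes P: "P \<in> carrier_mat n n" and sym: "P\<^sup>T = P" and x: "x \<in> carrier_vec n" and r: "r \<in> carrier_vec n"
  shows "(x + t \<cdot>\<^sub>v r) \<bullet> (P *\<^sub>v (x + t \<cdot>\<^sub>v r)) = x \<bullet> (P *\<^sub>v x) + 2*t*(r \<bullet> (P *\<^sub>v x)) + t^2*(r \<bullet> (P *\<^sub>v r))"
proof -
  have s1: "x \<bullet> (P *\<^sub>v r) = r \<bullet> (P *\<^sub>v x)"
  proof -
    have "x \<bullet> (P *\<^sub>v r) = (P\<^sup>T *\<^sub>v x) \<bullet> r" using transpose_vec_mult_scalar[OF P r x] by simp
    also have "\<dots> = (P *\<^sub>v x) \<bullet> r" using sym by simp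
    also have "\<dots> = r \<bullet> (P *\<^sub>v x)" using comm_scalar_prod[of "P *\<^sub>v x" n r] P x r by auto
    finally show ?thesis .
  qed
  have e1: "P *\<^sub>v (x + t \<cdot>\<^sub>v r) = P *\<^sub>v x + t \<cdot>\<^sub>v (P *\<^sub>v r)"
    using P x r by (simp add: mult_add_distrib_mat_vec mult_mat_vec)
  have Px: "P *\<^sub>v x \<in> carrier_vec n" and Pr: "P *\<^sub>v r \<in> carrier_vec n" using P x r by auto
  have "(x + t \<cdot>\<^sub>v r) \<bullet> (P *\<^sub>v x + t \<cdot>\<^sub>v (P *\<^sub>v r))
      = x \<bullet> (P *\<^sub>v x) + t * (x \<bullet> (P *\<^sub>v r)) + (t * (r \<bullet> (P *\<^sub>v x)) + t * t * (r \<bullet> (P *\<^sub>v r)))"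
    using x r Px Pr
    by (simp add: add_scalar_prod_distrib[of _ n] scalar_prod_add_distrib[of _ n])
  then show ?thesis unfolding e1 s1 by (simp add: power2_eq_square algebra_simps)
qed

lemma spectral_step:
  fixes P :: "real mat" and us :: "nat \<Rightarrow> real vec"
  assumes P: "P \<in> carrier_mat n n" and sym: "P\<^sup>T = P" and k: "k < n"
    and us: "\<forall>i<k. us i \<in> carrier_vec n" and ev: "\<forall>i<k. P *\<^sub>v us i = d i \<cdot>\<^sub>v us i"
  shows "\<exists>x \<in> carrier_vec n. x \<bullet> x = 1 \<and> (\<forall>i<k. us i \<bullet> x = 0) \<and> (\<exists>\<mu>. P *\<^sub>v x = \<mu> \<cdot>\<^sub>v x)"
proof -
  define V where "V = {y \<in> carrier_vec n. \<forall>i<k. us i \<bullet> y = 0}"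
  define tof where "tof x = (\<lambda>i. if i < n then x $ i else (0::real))" for x :: "real vec"
  define F where "F g = (\<Sum>i<n. g i * (\<Sum>l<n. P $$ (i,l) * g l))" for g :: "nat \<Rightarrow> real"
  define S where "S = {g. (\<forall>i. g i \<in> (if i < n then {-1..1} else {0})) \<and> (\<Sum>i<n. g i * g i) = 1
      \<and> (\<forall>j<k. (\<Sum>i<n. us j $ i * g i) = 0)}"
  have Fx: "F (tof x) = x \<bullet> (P *\<^sub>v x)" if x: "x \<in> carrier_vec n" for x
    using x P by (auto simp: F_def tof_def scalar_prod_def lessThan_atLeast0 intro!: sum.cong)
  have Nx: "(\<Sum>i<n. tof x i * tof x i) = x \<bullet> x" if x: "x \<in> carrier_vec n" for x
    using x by (auto simp: tof_def scalar_prod_def lessThan_atLeast0 intro!: sum.cong)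
  have Ox: "(\<Sum>i<n. us j $ i * tof x i) = us j \<bullet> x" if x: "x \<in> carrier_vec n" for x j
    using x by (auto simp: tof_def scalar_prod_def lessThan_atLeast0 intro!: sum.cong)
  have inS: "tof x \<in> S" if x: "x \<in> V" "x \<bullet> x = 1" for x
  proof -
    have xc: "x \<in> carrier_vec n" using x V_def by auto
    have "x $ i \<in> {-1..1}" if i: "i < n" for i
    proof -
      have "x$i * x$i \<le> 1" using comp_le_norm[OF xc i] x by simp
      then have "\<bar>x$i\<bar> \<le> 1" by (metis abs_le_square_iff abs_one power2_eq_square one_power2)
      then show ?thesis by auto
    qed
    then show ?thesis using Nx[OF xc] Ox[OF xc] x unfolding S_def V_def by (auto simp: tof_def)
  qed
  have cS: "compact S"
  proof -
    have "S = {g :: nat \<Rightarrow> real. \<forall>i. g i \<in> (if i < n then {-1..1} else {0})}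
      \<inter> {g. (\<Sum>i<n. g i * g i) = 1} \<inter> (\<Inter>j<k. {g. (\<Sum>i<n. us j $ i * g i) = 0})"
      unfolding S_def by auto
    moreover have "closed {g :: nat \<Rightarrow> real. (\<Sum>i<n. g i * g i) = 1}"
      by (intro closed_Collect_eq continuous_intros continuous_on_product_coordinates)
    moreover have "closed (\<Inter>j<k. {g :: nat \<Rightarrow> real. (\<Sum>i<n. us j $ i * g i) = 0})"
      by (intro closed_INT ballI closed_Collect_eq continuous_intros continuous_on_product_coordinates)
    ultimately show ?thesis using compact_box[of n]
      by (simp only:) (intro compact_Int_closed)
  qed
  obtain x0 where x0: "x0 \<in> carrier_vec n" "x0 \<noteq> 0\<^sub>v n" "\<forall>i<k. us i \<bullet> x0 = 0"
    using exists_orth[OF k us] by auto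
  have normalize: "(1 / sqrt (y \<bullet> y)) \<cdot>\<^sub>v y \<in> V \<and> ((1 / sqrt (y \<bullet> y)) \<cdot>\<^sub>v y) \<bullet> ((1 / sqrt (y \<bullet> y)) \<cdot>\<^sub>v y) = 1"
    if y: "y \<in> V" "y \<noteq> 0\<^sub>v n" for y
  proof -
    have yc: "y \<in> carrier_vec n" using y V_def by auto
    have pos: "y \<bullet> y > 0" using sprod_self_nonneg[of y] sprod_self_0[OF yc] y by force
    have "((1 / sqrt (y \<bullet> y)) \<cdot>\<^sub>v y) \<bullet> ((1 / sqrt (y \<bullet> y)) \<cdot>\<^sub>v y) = (1 / sqrt (y \<bullet> y))^2 * (y \<bullet> y)"
      using yc by (simp add: power2_eq_square)
    also have "\<dots> = 1" using pos by (simp add: power_divide)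
    finally show ?thesis using y yc us unfolding V_def by (auto simp: power2_eq_square)
  qed
  have x0V: "x0 \<in> V" using x0 V_def by auto
  have Sne: "S \<noteq> {}" using inS normalize[OF x0V x0(2)] by blast
  have "continuous_on UNIV F" unfolding F_def
    by (intro continuous_intros continuous_on_product_coordinates)
  then have cont: "continuous_on S F" using continuous_on_subset by blast
  obtain g0 where g0: "g0 \<in> S" "\<forall>g\<in>S. F g \<le> F g0"
    using continuous_attains_sup[OF cS Sne cont] by auto
  define x where "x = vec n g0"
  have xc: "x \<in> carrier_vec n" unfolding x_def by auto
  have tofx: "tof x = g0"
  proof
    fix i show "tof x i = g0 i" using g0(1) unfolding tof_def x_def S_def
      by (cases "i < n") (auto, metis singletonD)
  qed
  have xV: "x \<in> V" and xx: "x \<bullet> x = 1"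
    using g0(1) Nx[OF xc] Ox[OF xc] xc unfolding tofx S_def V_def by auto
  define \<mu> where "\<mu> = x \<bullet> (P *\<^sub>v x)"
  have le: "y \<bullet> (P *\<^sub>v y) \<le> \<mu> * (y \<bullet> y)" if y: "y \<in> V" for y
  proof (cases "y = 0\<^sub>v n")
    case True then show ?thesis using P by simp
  next
    case False
    have yc: "y \<in> carrier_vec n" using y V_def by auto
    have pos: "y \<bullet> y > 0" using sprod_self_nonneg[of y] sprod_self_0[OF yc] False by force
    define c where "c = 1 / sqrt (y \<bullet> y)"
    have z: "c \<cdot>\<^sub>v y \<in> V" "(c \<cdot>\<^sub>v y) \<bullet> (c \<cdot>\<^sub>v y) = 1" using normalize[OF y False] c_def by auto
    have "F (tof (c \<cdot>\<^sub>v y)) \<le> F g0" using g0(2) inS[OF z] by auto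
    also have "F g0 = \<mu>" unfolding \<mu>_def using Fx[OF xc] tofx by simp
    also have "F (tof (c \<cdot>\<^sub>v y)) = c^2 * (y \<bullet> (P *\<^sub>v y))"
      using Fx[of "c \<cdot>\<^sub>v y"] yc P by (simp add: mult_mat_vec power2_eq_square)
    finally have "c^2 * (y \<bullet> (P *\<^sub>v y)) \<le> \<mu>" .
    moreover have "c^2 = 1 / (y \<bullet> y)" unfolding c_def using pos by (simp add: power_divide)
    ultimately show ?thesis using pos by (simp add: field_simps)
  qed
  define r where "r = P *\<^sub>v x - \<mu> \<cdot>\<^sub>v x"
  have rc: "r \<in> carrier_vec n" unfolding r_def using P xc by auto
  have rV: "r \<in> V"
  proof -
    have "us i \<bullet> r = 0" if i: "i < k" for i
    proof -
      have ui: "us i \<in> carrier_vec n" using us i by auto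
      have "us i \<bullet> (P *\<^sub>v x) = (P\<^sup>T *\<^sub>v us i) \<bullet> x" using transpose_vec_mult_scalar[OF P xc ui] by simp
      also have "\<dots> = d i * (us i \<bullet> x)" using sym ev i ui xc by simp
      also have "us i \<bullet> x = 0" using xV i V_def by auto
      finally have a: "us i \<bullet> (P *\<^sub>v x) = 0" by simp
      have "us i \<bullet> r = us i \<bullet> (P *\<^sub>v x) - us i \<bullet> (\<mu> \<cdot>\<^sub>v x)"
        unfolding r_def using ui P xc by (simp add: scalar_prod_minus_distrib[of _ n])
      then show ?thesis using a \<open>us i \<bullet> x = 0\<close> ui xc by simp
    qed
    then show ?thesis using rc V_def by auto
  qed
  have rPx: "r \<bullet> (P *\<^sub>v x) - \<mu> * (r \<bullet> x) = r \<bullet> r"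
  proof -
    have "r \<bullet> r = r \<bullet> (P *\<^sub>v x) - r \<bullet> (\<mu> \<cdot>\<^sub>v x)"
      by (subst (2) r_def) (use rc P xc in \<open>simp add: scalar_prod_minus_distrib[of _ n]\<close>)
    then show ?thesis using rc xc by simp
  qed
  define a where "a = r \<bullet> r"
  define q where "q = r \<bullet> (P *\<^sub>v r) - \<mu> * (r \<bullet> r)"
  have q: "q \<le> 0" using le[OF rV] unfolding q_def by simp
  have ineq: "2 * t * a + t^2 * q \<le> 0" for t
  proof -
    have yV: "x + t \<cdot>\<^sub>v r \<in> V" using xV rV us unfolding V_def
      by (auto simp: scalar_prod_add_distrib[of _ n])
    have "(x + t \<cdot>\<^sub>v r) \<bullet> (P *\<^sub>v (x + t \<cdot>\<^sub>v r)) \<le> \<mu> * ((x + t \<cdot>\<^sub>v r) \<bullet> (x + t \<cdot>\<^sub>v r))"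
      by (rule le[OF yV])
    moreover have "(x + t \<cdot>\<^sub>v r) \<bullet> (x + t \<cdot>\<^sub>v r) = 1 + 2*t*(r \<bullet> x) + t^2*(r \<bullet> r)"
      using quad_expand[of "1\<^sub>m n" n x r t] xc rc xx by simp
    moreover have "(x + t \<cdot>\<^sub>v r) \<bullet> (P *\<^sub>v (x + t \<cdot>\<^sub>v r)) = \<mu> + 2*t*(r \<bullet> (P *\<^sub>v x)) + t^2*(r \<bullet> (P *\<^sub>v r))"
      using quad_expand[OF P sym xc rc, of t] \<mu>_def by simp
    ultimately have "\<mu> + 2*t*(r \<bullet> (P *\<^sub>v x)) + t^2*(r \<bullet> (P *\<^sub>v r)) \<le> \<mu> * (1 + 2*t*(r \<bullet> x) + t^2*(r \<bullet> r))"
      by simp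
    then have "2*t*(r \<bullet> (P *\<^sub>v x) - \<mu> * (r \<bullet> x)) + t^2*(r \<bullet> (P *\<^sub>v r) - \<mu> * (r \<bullet> r)) \<le> 0"
      by (simp add: algebra_simps)
    then show ?thesis unfolding rPx a_def q_def .
  qed
  have a0: "a = 0"
  proof (rule ccontr)
    assume "a \<noteq> 0"
    then have apos: "a > 0" unfolding a_def using sprod_self_nonneg[of r] by simp
    define t where "t = a / (1 - q)"
    have tpos: "t > 0" unfolding t_def using apos q by simp
    have "2 * t * a + t^2 * q \<le> 0" by (rule ineq)
    then have "t * (2 * a + t * q) \<le> 0" by (simp add: power2_eq_square algebra_simps)
    then have "2 * a + t * q \<le> 0" using tpos by (simp add: mult_le_0_iff)
    moreover have "t * q \<ge> - a"
    proof -
      have "t * q = a * (q / (1 - q))" unfolding t_def by simp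
      moreover have "q / (1 - q) \<ge> -1" using q by (simp add: field_simps)
      ultimately show ?thesis using apos
        by (metis mult.commute mult_le_cancel_left_pos mult_minus1_right)
    qed
    ultimately show False using apos by simp
  qed
  have "r = 0\<^sub>v n" using sprod_self_0[OF rc] a0 a_def by simp
  then have "P *\<^sub>v x = \<mu> \<cdot>\<^sub>v x"
  proof (intro eq_vecI)
    fix i assume "r = 0\<^sub>v n" and i: "i < dim_vec (\<mu> \<cdot>\<^sub>v x)"
    then have "r $ i = 0" using xc by simp
    then show "(P *\<^sub>v x) $ i = (\<mu> \<cdot>\<^sub>v x) $ i" unfolding r_def using i P xc by simp
  qed (use P xc in simp)
  then show ?thesis using xc xx xV V_def by auto
qed



lemma spectral_orth:
  fixes P :: "real mat"
  assumes P: "P \<in> carrier_mat n n" and sym: "P\<^sup>T = P"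
  shows "k \<le> n \<Longrightarrow> \<exists>us d. (\<forall>i<k. us i \<in> carrier_vec n) \<and> (\<forall>i<k. \<forall>j<k. us i \<bullet> us j = (if i = j then 1 else 0))
     \<and> (\<forall>i<k. P *\<^sub>v us i = d i \<cdot>\<^sub>v us i)"
proof (induction k)
  case 0 then show ?case by auto
next
  case (Suc k)
  then obtain us d where us: "\<forall>i<k. us i \<in> carrier_vec n"
    and on: "\<forall>i<k. \<forall>j<k. us i \<bullet> us j = (if i = j then 1 else 0)" and ev: "\<forall>i<k. P *\<^sub>v us i = d i \<cdot>\<^sub>v us i"
    by auto
  have k: "k < n" using Suc by auto
  obtain x \<mu> where x: "x \<in> carrier_vec n" "x \<bullet> x = 1" "\<forall>i<k. us i \<bullet> x = 0" "P *\<^sub>v x = \<mu> \<cdot>\<^sub>v x"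
    using spectral_step[OF P sym k us ev] by auto
  have x2: "x \<bullet> us i = 0" if "i < k" for i
    using x that us comm_scalar_prod[of x n "us i"] by auto
  have A: "\<forall>i<Suc k. (us(k:=x)) i \<in> carrier_vec n" using us x by (simp add: less_Suc_eq)
  have B: "\<forall>i<Suc k. \<forall>j<Suc k. (us(k:=x)) i \<bullet> (us(k:=x)) j = (if i = j then 1 else 0)"
  proof (intro allI impI)
    fix i j assume i: "i < Suc k" and j: "j < Suc k"
    show "(us(k:=x)) i \<bullet> (us(k:=x)) j = (if i = j then 1 else 0)"
    proof (cases "i = k")
      case True then show ?thesis using j x x2 by (cases "j = k") auto
    next
      case False then have "i < k" using i by simp
      then show ?thesis using j x on False by (cases "j = k") auto
    qed
  qed
  have C: "\<forall>i<Suc k. P *\<^sub>v (us(k:=x)) i = (d(k:=\<mu>)) i \<cdot>\<^sub>v (us(k:=x)) i"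
    using ev x by (simp add: less_Suc_eq)
  show ?case using A B C by blast
qed

lemma spectral:
  fixes P :: "real mat"
  assumes P: "P \<in> carrier_mat n n" and sym: "P\<^sup>T = P"
  shows "\<exists>us d. (\<forall>i<n. us i \<in> carrier_vec n) \<and> (\<forall>i<n. us i \<bullet> us i = 1)
     \<and> (\<forall>i<n. P *\<^sub>v us i = d i \<cdot>\<^sub>v us i)
     \<and> (\<forall>x\<in>carrier_vec n. \<forall>y\<in>carrier_vec n. x \<bullet> y = (\<Sum>i<n. (us i \<bullet> x) * (us i \<bullet> y)))"
proof -
  obtain us d where us: "\<forall>i<n. us i \<in> carrier_vec n"
    and on: "\<forall>i<n. \<forall>j<n. us i \<bullet> us j = (if i = j then 1 else 0)" and ev: "\<forall>i<n. P *\<^sub>v us i = d i \<cdot>\<^sub>v us i"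
    using spectral_orth[OF P sym, of n] by auto
  define U where "U = mat n n (\<lambda>(i,j). us i $ j)"
  have U: "U \<in> carrier_mat n n" and UT: "U\<^sup>T \<in> carrier_mat n n" unfolding U_def by auto
  have rowU: "row U i = us i" if "i < n" for i
    using that us by (auto simp: U_def intro!: eq_vecI)
  have "U * U\<^sup>T = 1\<^sub>m n"
  proof (rule eq_matI)
    fix i j assume i: "i < dim_row (1\<^sub>m n)" and j: "j < dim_col (1\<^sub>m n)"
    then have "(U * U\<^sup>T) $$ (i,j) = row U i \<bullet> row U j" using U by simp
    also have "\<dots> = us i \<bullet> us j" using rowU i j by simp
    also have "\<dots> = 1\<^sub>m n $$ (i,j)" using on i j by simp
    finally show "(U * U\<^sup>T) $$ (i,j) = 1\<^sub>m n $$ (i,j)" .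
  qed (use U in auto)
  then have UTU: "U\<^sup>T * U = 1\<^sub>m n" using mat_mult_left_right_inverse[OF U UT] by simp
  have pars: "x \<bullet> y = (\<Sum>i<n. (us i \<bullet> x) * (us i \<bullet> y))" if x: "x \<in> carrier_vec n" and y: "y \<in> carrier_vec n" for x y
  proof -
    have "x \<bullet> y = y \<bullet> x" using x y comm_scalar_prod by metis
    also have "\<dots> = (U\<^sup>T * U *\<^sub>v y) \<bullet> x" using UTU y by simp
    also have "\<dots> = (U\<^sup>T *\<^sub>v (U *\<^sub>v y)) \<bullet> x" using U y by (simp add: assoc_mult_mat_vec[of _ n n _ n])
    also have "\<dots> = (U *\<^sub>v y) \<bullet> (U *\<^sub>v x)" using transpose_vec_mult_scalar[OF U x, of "U *\<^sub>v y"] U y by simp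
    also have "\<dots> = (\<Sum>i<n. (us i \<bullet> x) * (us i \<bullet> y))"
      using U rowU by (auto simp: scalar_prod_def[of "U *\<^sub>v y"] lessThan_atLeast0 intro!: sum.cong)
    finally show ?thesis .
  qed
  have "\<forall>i<n. us i \<bullet> us i = 1" using on by simp
  then show ?thesis using us ev pars by blast
qed

lemma sv_data:
  fixes M :: "real mat"
  assumes M: "M \<in> carrier_mat r c"
  shows "\<exists>us d. (\<forall>i<c. d i \<ge> 0) \<and> pos_singular_values M = {s. s > 0 \<and> (\<exists>i<c. s^2 = d i)}
     \<and> (\<forall>x\<in>carrier_vec c. (M *\<^sub>v x) \<bullet> (M *\<^sub>v x) = (\<Sum>i<c. d i * (us i \<bullet> x)^2))
     \<and> (\<forall>x\<in>carrier_vec c. x \<bullet> x = (\<Sum>i<c. (us i \<bullet> x)^2))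
     \<and> (\<forall>x\<in>carrier_vec c. ((M\<^sup>T * M) *\<^sub>v x) \<bullet> ((M\<^sup>T * M) *\<^sub>v x) = (\<Sum>i<c. (d i)^2 * (us i \<bullet> x)^2))"
proof -
  define P where "P = M\<^sup>T * M"
  have P: "P \<in> carrier_mat c c" unfolding P_def using M by auto
  have sym: "P\<^sup>T = P" unfolding P_def using M by (simp add: transpose_mult[of _ c r _ c])
  obtain us d where us: "\<forall>i<c. us i \<in> carrier_vec c" and nrm: "\<forall>i<c. us i \<bullet> us i = 1"
    and ev: "\<forall>i<c. P *\<^sub>v us i = d i \<cdot>\<^sub>v us i"
    and pars: "\<forall>x\<in>carrier_vec c. \<forall>y\<in>carrier_vec c. x \<bullet> y = (\<Sum>i<c. (us i \<bullet> x) * (us i \<bullet> y))"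
    using spectral[OF P sym] by blast
  have key: "us i \<bullet> (P *\<^sub>v x) = d i * (us i \<bullet> x)" if x: "x \<in> carrier_vec c" and i: "i < c" for x i
  proof -
    have ui: "us i \<in> carrier_vec c" using us i by auto
    have "us i \<bullet> (P *\<^sub>v x) = (P\<^sup>T *\<^sub>v us i) \<bullet> x" using transpose_vec_mult_scalar[OF P x ui] by simp
    also have "\<dots> = d i * (us i \<bullet> x)" using sym ev i ui x by simp
    finally show ?thesis .
  qed
  have Mx2: "(M *\<^sub>v x) \<bullet> (M *\<^sub>v x) = x \<bullet> (P *\<^sub>v x)" if x: "x \<in> carrier_vec c" for x
  proof -
    have "(M *\<^sub>v x) \<bullet> (M *\<^sub>v x) = (M\<^sup>T *\<^sub>v (M *\<^sub>v x)) \<bullet> x"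
      using transpose_vec_mult_scalar[OF M x, of "M *\<^sub>v x"] M x by simp
    also have "M\<^sup>T *\<^sub>v (M *\<^sub>v x) = P *\<^sub>v x" unfolding P_def using M x
      by (simp add: assoc_mult_mat_vec[of _ c r _ c])
    also have "(P *\<^sub>v x) \<bullet> x = x \<bullet> (P *\<^sub>v x)" using P x comm_scalar_prod[of "P *\<^sub>v x" c x] by simp
    finally show ?thesis .
  qed
  have quad: "(M *\<^sub>v x) \<bullet> (M *\<^sub>v x) = (\<Sum>i<c. d i * (us i \<bullet> x)^2)" if x: "x \<in> carrier_vec c" for x
  proof -
    have "(M *\<^sub>v x) \<bullet> (M *\<^sub>v x) = (\<Sum>i<c. (us i \<bullet> x) * (us i \<bullet> (P *\<^sub>v x)))"
      using Mx2[OF x] pars x P by simp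
    also have "\<dots> = (\<Sum>i<c. d i * (us i \<bullet> x)^2)"
      by (rule sum.cong) (use key x in \<open>auto simp: power2_eq_square\<close>)
    finally show ?thesis .
  qed
  have nx: "x \<bullet> x = (\<Sum>i<c. (us i \<bullet> x)^2)" if x: "x \<in> carrier_vec c" for x
    using pars x by (simp add: power2_eq_square)
  have px: "(P *\<^sub>v x) \<bullet> (P *\<^sub>v x) = (\<Sum>i<c. (d i)^2 * (us i \<bullet> x)^2)" if x: "x \<in> carrier_vec c" for x
  proof -
    have "(P *\<^sub>v x) \<bullet> (P *\<^sub>v x) = (\<Sum>i<c. (us i \<bullet> (P *\<^sub>v x)) * (us i \<bullet> (P *\<^sub>v x)))"
      using pars x P by simp
    also have "\<dots> = (\<Sum>i<c. (d i)^2 * (us i \<bullet> x)^2)"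
      by (rule sum.cong) (use key x in \<open>auto simp: power2_eq_square\<close>)
    finally show ?thesis .
  qed
  have dnn: "d i \<ge> 0" if i: "i < c" for i
  proof -
    have ui: "us i \<in> carrier_vec c" using us i by auto
    have "d i = us i \<bullet> (P *\<^sub>v us i)" using key[OF ui i] nrm i by simp
    also have "\<dots> = (M *\<^sub>v us i) \<bullet> (M *\<^sub>v us i)" using Mx2[OF ui] by simp
    finally show ?thesis using sprod_self_nonneg by simp
  qed
  have S1: "s \<in> {s. s > 0 \<and> (\<exists>i<c. s^2 = d i)}" if "s \<in> pos_singular_values M" for s
  proof -
    from that have s: "s > 0" "eigenvalue P (s^2)" unfolding pos_singular_values_def P_def by auto
    then obtain v where v: "v \<in> carrier_vec c" "v \<noteq> 0\<^sub>v c" "P *\<^sub>v v = s^2 \<cdot>\<^sub>v v"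
      unfolding eigenvalue_def eigenvector_def using P by auto
    have "\<exists>i<c. s^2 = d i"
    proof (rule ccontr)
      assume nd: "\<not> (\<exists>i<c. s^2 = d i)"
      have "us i \<bullet> v = 0" if i: "i < c" for i
      proof -
        have ui: "us i \<in> carrier_vec c" using us i by auto
        have e1: "us i \<bullet> (P *\<^sub>v v) = s^2 * (us i \<bullet> v)" using v(3) ui v(1) by simp
        have "d i * (us i \<bullet> v) = s^2 * (us i \<bullet> v)" by (simp only: key[OF v(1) i, symmetric] e1)
        moreover have "d i \<noteq> s^2" using nd i by auto
        ultimately show ?thesis by simp
      qed
      then have "v \<bullet> v = 0" using nx[OF v(1)] by simp
      then show False using sprod_self_0[OF v(1)] v(2) by simp
    qed
    then show "s \<in> {s. s > 0 \<and> (\<exists>i<c. s^2 = d i)}" using s by auto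
  qed
  have S2: "s \<in> pos_singular_values M" if "s \<in> {s. s > 0 \<and> (\<exists>i<c. s^2 = d i)}" for s
  proof -
    from that obtain i where s: "s > 0" "i < c" "s^2 = d i" by auto
    have ui: "us i \<in> carrier_vec c" using us s(2) by auto
    have "us i \<noteq> 0\<^sub>v c" using nrm s(2) by auto
    then have "eigenvector P (us i) (s^2)" unfolding eigenvector_def using ui P ev s by auto
    then show "s \<in> pos_singular_values M" unfolding pos_singular_values_def eigenvalue_def P_def
      using s by auto
  qed
  have S: "pos_singular_values M = {s. s > 0 \<and> (\<exists>i<c. s^2 = d i)}" using S1 S2 by blast
  show ?thesis
    apply (rule exI[of _ us], rule exI[of _ d])
    using dnn S quad nx px unfolding P_def by blast
qed

lemma sv_finite:
  fixes M :: "real mat"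
  assumes M: "M \<in> carrier_mat r c"
  shows "finite (pos_singular_values M)"
proof -
  obtain us d where S: "pos_singular_values M = {s. s > 0 \<and> (\<exists>i<c. s^2 = d i)}"
    using sv_data[OF M] by blast
  have "pos_singular_values M \<subseteq> (\<lambda>i. sqrt (d i)) ` {..<c}"
  proof
    fix s assume "s \<in> pos_singular_values M"
    then obtain i where "s > 0" "i < c" "s^2 = d i" using S by auto
    then have "s = sqrt (d i)" by (metis less_imp_le real_sqrt_unique)
    then show "s \<in> (\<lambda>i. sqrt (d i)) ` {..<c}" using \<open>i < c\<close> by auto
  qed
  then show ?thesis using finite_subset by blast
qed

lemma sv_nonempty:
  fixes M :: "real mat"
  assumes M: "M \<in> carrier_mat r c" and a: "a < r" and b: "b < c" and nz: "M $$ (a,b) \<noteq> 0"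
  shows "pos_singular_values M \<noteq> {}"
proof -
  obtain us d where dnn: "\<forall>i<c. d i \<ge> 0" and S: "pos_singular_values M = {s. s > 0 \<and> (\<exists>i<c. s^2 = d i)}"
    and quad: "\<forall>x\<in>carrier_vec c. (M *\<^sub>v x) \<bullet> (M *\<^sub>v x) = (\<Sum>i<c. d i * (us i \<bullet> x)^2)"
    using sv_data[OF M] by blast
  define x :: "real vec" where "x = unit_vec c b"
  have xc: "x \<in> carrier_vec c" unfolding x_def by auto
  have "(M *\<^sub>v x) $ a = M $$ (a,b)" unfolding x_def using M a b by simp
  then have "(M $$ (a,b)) * (M $$ (a,b)) \<le> (M *\<^sub>v x) \<bullet> (M *\<^sub>v x)"
    using comp_le_norm[of "M *\<^sub>v x" r a] M xc a by simp
  then have "(\<Sum>i<c. d i * (us i \<bullet> x)^2) > 0" using quad xc nz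
    by (metis not_less not_square_less_zero order.trans zero_less_mult_iff linorder_neqE_linordered_idom)
  then obtain i where i: "i < c" "d i * (us i \<bullet> x)^2 \<noteq> 0"
    by (metis (no_types, lifting) lessThan_iff less_irrefl sum.neutral)
  then have "d i > 0" using dnn by force
  then have "sqrt (d i) \<in> pos_singular_values M" using S i by auto
  then show ?thesis by auto
qed

lemma sv_bounds:
  fixes M :: "real mat"
  assumes M: "M \<in> carrier_mat r c" and ne: "pos_singular_values M \<noteq> {}" and x: "x \<in> carrier_vec c"
  shows "(M *\<^sub>v x) \<bullet> (M *\<^sub>v x) \<le> (Max (pos_singular_values M))^2 * (x \<bullet> x)"
    and "(Min (pos_singular_values M))^2 * ((M *\<^sub>v x) \<bullet> (M *\<^sub>v x)) \<le> ((M\<^sup>T * M) *\<^sub>v x) \<bullet> ((M\<^sup>T * M) *\<^sub>v x)"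
    and "Min (pos_singular_values M) > 0"
proof -
  obtain us d where dnn: "\<forall>i<c. d i \<ge> 0" and S: "pos_singular_values M = {s. s > 0 \<and> (\<exists>i<c. s^2 = d i)}"
    and quad: "\<forall>x\<in>carrier_vec c. (M *\<^sub>v x) \<bullet> (M *\<^sub>v x) = (\<Sum>i<c. d i * (us i \<bullet> x)^2)"
    and nx: "\<forall>x\<in>carrier_vec c. x \<bullet> x = (\<Sum>i<c. (us i \<bullet> x)^2)"
    and px: "\<forall>x\<in>carrier_vec c. ((M\<^sup>T * M) *\<^sub>v x) \<bullet> ((M\<^sup>T * M) *\<^sub>v x) = (\<Sum>i<c. (d i)^2 * (us i \<bullet> x)^2)"
    using sv_data[OF M] by blast
  define S' where "S' = pos_singular_values M"
  have fin: "finite S'" unfolding S'_def by (rule sv_finite[OF M])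
  have ne': "S' \<noteq> {}" using ne S'_def by simp
  have pos: "\<forall>s\<in>S'. s > 0" unfolding S'_def S by auto
  have minpos: "Min S' > 0" using Min_in[OF fin ne'] pos by auto
  have maxpos: "Max S' > 0" using Max_in[OF fin ne'] pos by auto
  have sq: "sqrt (d i) \<in> S'" if "i < c" "d i > 0" for i unfolding S'_def S using that by auto
  have dle: "d i \<le> (Max S')^2" if i: "i < c" for i
  proof (cases "d i > 0")
    case True
    then have "sqrt (d i) \<le> Max S'" using Max_ge[OF fin sq[OF i True]] by simp
    then show ?thesis using True by (metis real_sqrt_le_iff real_sqrt_pow2 less_imp_le sqrt_le_D)
  next
    case False then have "d i = 0" using dnn i by force
    then show ?thesis by simp
  qed
  have dge: "(Min S')^2 * d i \<le> (d i)^2" if i: "i < c" for i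
  proof (cases "d i > 0")
    case True
    then have "Min S' \<le> sqrt (d i)" using Min_le[OF fin sq[OF i True]] by simp
    then have "(Min S')^2 \<le> d i" using minpos True by (metis less_imp_le power_mono real_sqrt_pow2)
    then show ?thesis using True by (simp add: power2_eq_square mult_right_mono)
  next
    case False then have "d i = 0" using dnn i by force
    then show ?thesis by simp
  qed
  have "(M *\<^sub>v x) \<bullet> (M *\<^sub>v x) = (\<Sum>i<c. d i * (us i \<bullet> x)^2)" using quad x by simp
  also have "\<dots> \<le> (\<Sum>i<c. (Max S')^2 * (us i \<bullet> x)^2)"
    by (rule sum_mono) (use dle in \<open>auto intro: mult_right_mono\<close>)
  also have "\<dots> = (Max S')^2 * (x \<bullet> x)" using nx x by (simp add: sum_distrib_left)
  finally show "(M *\<^sub>v x) \<bullet> (M *\<^sub>v x) \<le> (Max (pos_singular_values M))^2 * (x \<bullet> x)" unfolding S'_def .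
  have "(Min S')^2 * ((M *\<^sub>v x) \<bullet> (M *\<^sub>v x)) = (\<Sum>i<c. (Min S')^2 * d i * (us i \<bullet> x)^2)"
    using quad x by (simp add: sum_distrib_left mult.assoc)
  also have "\<dots> \<le> (\<Sum>i<c. (d i)^2 * (us i \<bullet> x)^2)"
    by (rule sum_mono) (use dge in \<open>auto intro: mult_right_mono\<close>)
  also have "\<dots> = ((M\<^sup>T * M) *\<^sub>v x) \<bullet> ((M\<^sup>T * M) *\<^sub>v x)" using px x by simp
  finally show "(Min (pos_singular_values M))^2 * ((M *\<^sub>v x) \<bullet> (M *\<^sub>v x)) \<le> ((M\<^sup>T * M) *\<^sub>v x) \<bullet> ((M\<^sup>T * M) *\<^sub>v x)"
    unfolding S'_def .
  show "Min (pos_singular_values M) > 0" using minpos S'_def by simp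
qed



definition Bmat :: "nat \<Rightarrow> real mat" where
  "Bmat n = mat n (Suc n) (\<lambda>(k,j). if j < n then (if k = j then 1 else 0) else -1)"

lemma Bmat_carrier: "Bmat n \<in> carrier_mat n (Suc n)" unfolding Bmat_def by auto

lemma Bv_idx:
  assumes v: "v \<in> carrier_vec (Suc n)" and k: "k < n"
  shows "(Bmat n *\<^sub>v v) $ k = v $ k - v $ n"
proof -
  have "(Bmat n *\<^sub>v v) $ k = (\<Sum>j<Suc n. Bmat n $$ (k,j) * v $ j)"
    using v k Bmat_carrier[of n] by (auto simp: scalar_prod_def lessThan_atLeast0 intro!: sum.cong)
  also have "\<dots> = (\<Sum>j<n. Bmat n $$ (k,j) * v $ j) + Bmat n $$ (k,n) * v $ n" by simp
  also have "(\<Sum>j<n. Bmat n $$ (k,j) * v $ j) = (\<Sum>j<n. (if k = j then v $ j else 0))"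
    by (intro sum.cong refl) (use k in \<open>auto simp: Bmat_def\<close>)
  also have "\<dots> = v $ k" using k by simp
  finally show ?thesis using k by (simp add: Bmat_def)
qed

lemma BTu_idx:
  assumes u: "u \<in> carrier_vec n" and j: "j < n"
  shows "((Bmat n)\<^sup>T *\<^sub>v u) $ j = u $ j"
proof -
  have "((Bmat n)\<^sup>T *\<^sub>v u) $ j = (\<Sum>k<n. Bmat n $$ (k,j) * u $ k)"
    using u j Bmat_carrier[of n] by (auto simp: scalar_prod_def lessThan_atLeast0 intro!: sum.cong)
  also have "\<dots> = (\<Sum>k<n. (if k = j then u $ k else 0))"
    by (intro sum.cong refl) (use j in \<open>auto simp: Bmat_def\<close>)
  also have "\<dots> = u $ j" using j by simp
  finally show ?thesis .
qed

lemma Bv_norm: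
  assumes v: "v \<in> carrier_vec (Suc n)"
  shows "(Bmat n *\<^sub>v v) \<bullet> (Bmat n *\<^sub>v v) \<le> 2 * (real n + 1) * (v \<bullet> v)"
proof -
  have Bv: "Bmat n *\<^sub>v v \<in> carrier_vec n" using Bmat_carrier[of n] v by auto
  have "(Bmat n *\<^sub>v v) \<bullet> (Bmat n *\<^sub>v v) = (\<Sum>k<n. (v $ k - v $ n) * (v $ k - v $ n))"
    using sprod_self[OF Bv] Bv_idx[OF v] by simp
  also have "\<dots> \<le> (\<Sum>k<n. 2 * (v $ k * v $ k) + 2 * (v $ n * v $ n))"
  proof (rule sum_mono)
    fix k show "(v $ k - v $ n) * (v $ k - v $ n) \<le> 2 * (v $ k * v $ k) + 2 * (v $ n * v $ n)"
      using sum_squares_ge_zero[of "v$k + v$n" "0::real"]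
      by (simp add: algebra_simps)
  qed
  also have "\<dots> = 2 * (\<Sum>k<n. v $ k * v $ k) + 2 * n * (v $ n * v $ n)"
    by (simp add: sum.distrib sum_distrib_left)
  finally have s1: "(Bmat n *\<^sub>v v) \<bullet> (Bmat n *\<^sub>v v) \<le> 2 * (\<Sum>k<n. v $ k * v $ k) + 2 * n * (v $ n * v $ n)" .
  have s2: "(\<Sum>k<n. v $ k * v $ k) \<le> v \<bullet> v"
    using sprod_self[OF v] by (simp add: sum_nonneg)
  have "v $ n * v $ n \<le> v \<bullet> v" using comp_le_norm[OF v] by simp
  then have s3: "real n * (v $ n * v $ n) \<le> real n * (v \<bullet> v)" by (rule mult_left_mono) auto
  show ?thesis using s1 s2 s3 by (simp add: algebra_simps)
qed

lemma sv_eig: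
  fixes M :: "real mat"
  assumes M: "M \<in> carrier_mat r c" and s: "s \<in> pos_singular_values M"
  shows "\<exists>v\<in>carrier_vec c. v \<bullet> v > 0 \<and> (M\<^sup>T * M) *\<^sub>v v = s^2 \<cdot>\<^sub>v v \<and> (M *\<^sub>v v) \<bullet> (M *\<^sub>v v) = s^2 * (v \<bullet> v)"
proof -
  have P: "M\<^sup>T * M \<in> carrier_mat c c" using M by auto
  obtain v where v: "v \<in> carrier_vec c" "v \<noteq> 0\<^sub>v c" "(M\<^sup>T * M) *\<^sub>v v = s^2 \<cdot>\<^sub>v v"
    using s P unfolding pos_singular_values_def eigenvalue_def eigenvector_def by auto
  have pos: "v \<bullet> v > 0" using sprod_self_nonneg[of v] sprod_self_0[OF v(1)] v(2) by force
  have "(M *\<^sub>v v) \<bullet> (M *\<^sub>v v) = (M\<^sup>T *\<^sub>v (M *\<^sub>v v)) \<bullet> v"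
    using transpose_vec_mult_scalar[OF M v(1), of "M *\<^sub>v v"] M v by simp
  also have "M\<^sup>T *\<^sub>v (M *\<^sub>v v) = (M\<^sup>T * M) *\<^sub>v v" using M v
    by (simp add: assoc_mult_mat_vec[of _ c r _ c])
  also have "((M\<^sup>T * M) *\<^sub>v v) \<bullet> v = s^2 * (v \<bullet> v)" using v by simp
  finally show ?thesis using v pos by auto
qed

lemma main_real:
  fixes A Z :: "real mat"
  assumes A: "A \<in> carrier_mat m n" and a: "a < m" and b: "b < n" and nzA: "A $$ (a,b) \<noteq> 0"
    and Z: "Z = A * Bmat n" and nzZ: "Z $$ (a,b) \<noteq> 0"
  shows "cond_num Z \<le> sqrt (2 * (real n + 1)) * cond_num A"
proof -
  have Zc: "Z \<in> carrier_mat m (Suc n)" unfolding Z using A Bmat_carrier[of n] by auto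
  define SA where "SA = pos_singular_values A"
  define SZ where "SZ = pos_singular_values Z"
  have neA: "SA \<noteq> {}" unfolding SA_def by (rule sv_nonempty[OF A a b nzA])
  have neZ: "SZ \<noteq> {}" unfolding SZ_def by (rule sv_nonempty[OF Zc a _ nzZ]) (use b in simp)
  have finA: "finite SA" unfolding SA_def by (rule sv_finite[OF A])
  have finZ: "finite SZ" unfolding SZ_def by (rule sv_finite[OF Zc])
  have minA: "Min SA > 0" unfolding SA_def using sv_bounds(3)[OF A neA[unfolded SA_def], of "0\<^sub>v n"] by simp
  have posA: "\<forall>s\<in>SA. s > 0" unfolding SA_def pos_singular_values_def by auto
  have posZ: "\<forall>s\<in>SZ. s > 0" unfolding SZ_def pos_singular_values_def by auto
  have maxA: "Max SA > 0" using Max_in[OF finA neA] posA by auto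
  define K where "K = sqrt (2 * (real n + 1))"
  have K: "K > 0" unfolding K_def by simp
  have up: "s \<le> K * Max SA" if s: "s \<in> SZ" for s
  proof -
    obtain v where v: "v \<in> carrier_vec (Suc n)" "v \<bullet> v > 0" "(Z *\<^sub>v v) \<bullet> (Z *\<^sub>v v) = s^2 * (v \<bullet> v)"
      using sv_eig[OF Zc s[unfolded SZ_def]] by auto
    define w where "w = Bmat n *\<^sub>v v"
    have w: "w \<in> carrier_vec n" unfolding w_def using v Bmat_carrier[of n] by auto
    have Zv: "Z *\<^sub>v v = A *\<^sub>v w" unfolding Z w_def using A v Bmat_carrier[of n]
      by (simp add: assoc_mult_mat_vec[of _ m n _ "Suc n"])
    have "s^2 * (v \<bullet> v) = (A *\<^sub>v w) \<bullet> (A *\<^sub>v w)" using v Zv by simp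
    also have "\<dots> \<le> (Max SA)^2 * (w \<bullet> w)" unfolding SA_def by (rule sv_bounds(1)[OF A neA[unfolded SA_def] w])
    also have "\<dots> \<le> (Max SA)^2 * (2 * (real n + 1) * (v \<bullet> v))" unfolding w_def
      by (rule mult_left_mono[OF Bv_norm[OF v(1)]]) simp
    finally have "s^2 * (v \<bullet> v) \<le> (2 * (real n + 1) * (Max SA)^2) * (v \<bullet> v)" by (simp add: algebra_simps)
    then have "s^2 \<le> 2 * (real n + 1) * (Max SA)^2" using v(2) by simp
    then have "sqrt (s^2) \<le> sqrt (2 * (real n + 1) * (Max SA)^2)" by (rule real_sqrt_le_mono)
    then show ?thesis using s posZ maxA unfolding K_def by (simp add: real_sqrt_mult)
  qed
  have low: "Min SA \<le> s" if s: "s \<in> SZ" for s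
  proof -
    obtain v where v: "v \<in> carrier_vec (Suc n)" "v \<bullet> v > 0" "(Z\<^sup>T * Z) *\<^sub>v v = s^2 \<cdot>\<^sub>v v"
      using sv_eig[OF Zc s[unfolded SZ_def]] by auto
    have spos: "s > 0" using s posZ by auto
    define w where "w = Bmat n *\<^sub>v v"
    have w: "w \<in> carrier_vec n" unfolding w_def using v Bmat_carrier[of n] by auto
    define u where "u = (A\<^sup>T * A) *\<^sub>v w"
    have u: "u \<in> carrier_vec n" unfolding u_def using A w by auto
    have Zv: "Z *\<^sub>v v = A *\<^sub>v w" unfolding Z w_def using A v Bmat_carrier[of n]
      by (simp add: assoc_mult_mat_vec[of _ m n _ "Suc n"])
    have ZT: "Z\<^sup>T = (Bmat n)\<^sup>T * A\<^sup>T" unfolding Z using A Bmat_carrier[of n]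
      by (simp add: transpose_mult[of _ m n _ "Suc n"])
    have "(Z\<^sup>T * Z) *\<^sub>v v = Z\<^sup>T *\<^sub>v (Z *\<^sub>v v)" using Zc v by (simp add: assoc_mult_mat_vec[of _ "Suc n" m _ "Suc n"])
    also have "\<dots> = ((Bmat n)\<^sup>T * A\<^sup>T) *\<^sub>v (A *\<^sub>v w)" unfolding ZT Zv ..
    also have "\<dots> = (Bmat n)\<^sup>T *\<^sub>v (A\<^sup>T *\<^sub>v (A *\<^sub>v w))" using A w Bmat_carrier[of n]
      by (simp add: assoc_mult_mat_vec[of _ "Suc n" n _ m])
    also have "A\<^sup>T *\<^sub>v (A *\<^sub>v w) = u" unfolding u_def using A w by (simp add: assoc_mult_mat_vec[of _ n m _ n])
    finally have BTu: "(Bmat n)\<^sup>T *\<^sub>v u = s^2 \<cdot>\<^sub>v v" using v by simp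
    have BTuc: "(Bmat n)\<^sup>T *\<^sub>v u \<in> carrier_vec (Suc n)" using Bmat_carrier[of n] u by auto
    have n1: "u \<bullet> u \<le> ((Bmat n)\<^sup>T *\<^sub>v u) \<bullet> ((Bmat n)\<^sup>T *\<^sub>v u)"
    proof -
      have "((Bmat n)\<^sup>T *\<^sub>v u) \<bullet> ((Bmat n)\<^sup>T *\<^sub>v u)
          = (\<Sum>j<n. ((Bmat n)\<^sup>T *\<^sub>v u) $ j * ((Bmat n)\<^sup>T *\<^sub>v u) $ j) + ((Bmat n)\<^sup>T *\<^sub>v u) $ n * ((Bmat n)\<^sup>T *\<^sub>v u) $ n"
        using sprod_self[OF BTuc] by simp
      also have "(\<Sum>j<n. ((Bmat n)\<^sup>T *\<^sub>v u) $ j * ((Bmat n)\<^sup>T *\<^sub>v u) $ j) = u \<bullet> u"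
        using sprod_self[OF u] BTu_idx[OF u] by simp
      finally show ?thesis by simp
    qed
    have n2: "((Bmat n)\<^sup>T *\<^sub>v u) \<bullet> ((Bmat n)\<^sup>T *\<^sub>v u) = s^2 * (u \<bullet> w)"
    proof -
      have "((Bmat n)\<^sup>T *\<^sub>v u) \<bullet> ((Bmat n)\<^sup>T *\<^sub>v u) = ((Bmat n)\<^sup>T *\<^sub>v u) \<bullet> (s^2 \<cdot>\<^sub>v v)" using BTu by simp
      also have "\<dots> = s^2 * (((Bmat n)\<^sup>T *\<^sub>v u) \<bullet> v)" using BTuc v by simp
      also have "((Bmat n)\<^sup>T *\<^sub>v u) \<bullet> v = u \<bullet> w" unfolding w_def
        by (rule transpose_vec_mult_scalar[OF Bmat_carrier v(1) u])
      finally show ?thesis .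
    qed
    have n3: "u \<bullet> w = (A *\<^sub>v w) \<bullet> (A *\<^sub>v w)"
    proof -
      have "(A *\<^sub>v w) \<bullet> (A *\<^sub>v w) = (A\<^sup>T *\<^sub>v (A *\<^sub>v w)) \<bullet> w"
        using transpose_vec_mult_scalar[OF A w, of "A *\<^sub>v w"] A w by simp
      also have "A\<^sup>T *\<^sub>v (A *\<^sub>v w) = u" unfolding u_def using A w by (simp add: assoc_mult_mat_vec[of _ n m _ n])
      finally show ?thesis by simp
    qed
    define q where "q = (A *\<^sub>v w) \<bullet> (A *\<^sub>v w)"
    have "((Bmat n)\<^sup>T *\<^sub>v u) \<bullet> ((Bmat n)\<^sup>T *\<^sub>v u) = (s^2 * s^2) * (v \<bullet> v)" using BTu v by simp
    also have "\<dots> > 0" using spos v(2) by simp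
    finally have "s^2 * q > 0" using n2 n3 q_def by simp
    then have qpos: "q > 0" using spos by (simp add: zero_less_mult_iff)
    have "(Min SA)^2 * q \<le> u \<bullet> u" unfolding SA_def q_def using sv_bounds(2)[OF A neA[unfolded SA_def] w] u_def by simp
    also have "\<dots> \<le> s^2 * q" using n1 n2 n3 q_def by simp
    finally have "(Min SA)^2 \<le> s^2" using qpos by simp
    then show ?thesis using spos by (rule power2_le_imp_le[OF _ less_imp_le])
  qed
  have maxZ: "Max SZ \<le> K * Max SA" using up Max_in[OF finZ neZ] by blast
  have minZ: "Min SA \<le> Min SZ" using low Min_in[OF finZ neZ] by blast
  have "cond_num Z = Max SZ / Min SZ" unfolding cond_num_def SZ_def ..
  also have "\<dots> \<le> (K * Max SA) / Min SZ" using maxZ minA minZ by (intro divide_right_mono) auto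
  also have "\<dots> \<le> (K * Max SA) / Min SA" using minA minZ K maxA by (intro divide_left_mono) auto
  also have "\<dots> = K * cond_num A" unfolding cond_num_def SA_def by simp
  finally show ?thesis unfolding K_def .
qed


lemma cond_nonneg:
  fixes M :: "real mat"
  assumes M: "M \<in> carrier_mat r c" and ne: "pos_singular_values M \<noteq> {}"
  shows "cond_num M \<ge> 0"
proof -
  have fin: "finite (pos_singular_values M)" by (rule sv_finite[OF M])
  have pos: "\<forall>s\<in>pos_singular_values M. s > 0" unfolding pos_singular_values_def by auto
  have "Max (pos_singular_values M) > 0" using Max_in[OF fin ne] pos by auto
  moreover have "Min (pos_singular_values M) > 0" using Min_in[OF fin ne] pos by auto
  ultimately show ?thesis unfolding cond_num_def by simp
qed

lemma const_bound:
  assumes n: "n > 0"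
  shows "sqrt (2 * (real n + 1)) \<le> 2 * real n powr (3/2)"
proof -
  have n1: "real n \<ge> 1" using n by simp
  have "sqrt (2 * (real n + 1)) \<le> sqrt (4 * real n)" using n1 by simp
  also have "\<dots> = 2 * sqrt (real n)" by (simp add: real_sqrt_mult)
  also have "sqrt (real n) = real n powr (1/2)" by (simp add: powr_half_sqrt)
  also have "real n powr (1/2) \<le> real n powr (3/2)" by (rule powr_mono) (use n1 in auto)
  finally show ?thesis by simp
qed

lemma AZ_eq:
  fixes A :: "int mat"
  assumes A: "A \<in> carrier_mat m n"
  shows "map_mat real_of_int (AZ A) = map_mat real_of_int A * Bmat n"
proof (rule eq_matI)
  have dA: "dim_row A = m" "dim_col A = n" using A by auto
  show "dim_row (map_mat real_of_int (AZ A)) = dim_row (map_mat real_of_int A * Bmat n)"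
    using A by (simp add: AZ_def)
  show "dim_col (map_mat real_of_int (AZ A)) = dim_col (map_mat real_of_int A * Bmat n)"
    using A Bmat_carrier[of n] by (simp add: AZ_def)
  fix i j assume i: "i < dim_row (map_mat real_of_int A * Bmat n)" and j: "j < dim_col (map_mat real_of_int A * Bmat n)"
  then have i: "i < m" and j: "j < Suc n" using A Bmat_carrier[of n] by auto
  have "(map_mat real_of_int A * Bmat n) $$ (i,j) = (\<Sum>k<n. real_of_int (A $$ (i,k)) * Bmat n $$ (k,j))"
    using A Bmat_carrier[of n] i j by (auto simp: scalar_prod_def lessThan_atLeast0 intro!: sum.cong)
  also have "\<dots> = real_of_int (AZ A $$ (i,j))"
  proof (cases "j < n")
    case True
    have "(\<Sum>k<n. real_of_int (A $$ (i,k)) * Bmat n $$ (k,j)) = (\<Sum>k<n. if k = j then real_of_int (A $$ (i,k)) else 0)"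
      by (intro sum.cong refl) (use True in \<open>auto simp: Bmat_def\<close>)
    also have "\<dots> = real_of_int (A $$ (i,j))" using True by simp
    finally show ?thesis using True i dA by (simp add: AZ_def)
  next
    case False
    then have jn: "j = n" using j by simp
    have "(\<Sum>k<n. real_of_int (A $$ (i,k)) * Bmat n $$ (k,j)) = (\<Sum>k<n. - real_of_int (A $$ (i,k)))"
      by (intro sum.cong refl) (use jn in \<open>auto simp: Bmat_def\<close>)
    also have "\<dots> = real_of_int (AZ A $$ (i,j))" using jn i dA by (simp add: AZ_def sum_negf)
    finally show ?thesis .
  qed
  also have "\<dots> = map_mat real_of_int (AZ A) $$ (i,j)" using i j dA by (simp add: AZ_def)
  finally show "map_mat real_of_int (AZ A) $$ (i,j) = (map_mat real_of_int A * Bmat n) $$ (i,j)" by simp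
qed

theorem lemma7p8:
  "\<exists>C::real. \<forall>(A::int mat) m n.
     A \<in> carrier_mat m n \<longrightarrow> n > 0 \<longrightarrow>
     (\<forall>i<m. \<exists>j<n. A $$ (i,j) \<noteq> 0) \<longrightarrow>
     (\<forall>j<n. \<exists>i<m. A $$ (i,j) \<noteq> 0) \<longrightarrow>
     cond_num (map_mat real_of_int (AZ A))
       \<le> C * real n powr (3/2) * cond_num (map_mat real_of_int A)"
proof (rule exI[of _ 2], intro allI impI)
  fix A :: "int mat" and m n
  assume A: "A \<in> carrier_mat m n" and n: "n > 0" and rows: "\<forall>i<m. \<exists>j<n. A $$ (i,j) \<noteq> 0"
    and cols: "\<forall>j<n. \<exists>i<m. A $$ (i,j) \<noteq> 0"
  obtain a where a: "a < m" "A $$ (a,0) \<noteq> 0" using cols n by auto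
  define Ar where "Ar = map_mat real_of_int A"
  define Zr where "Zr = map_mat real_of_int (AZ A)"
  have Ar: "Ar \<in> carrier_mat m n" unfolding Ar_def using A by auto
  have Z: "Zr = Ar * Bmat n" unfolding Zr_def Ar_def by (rule AZ_eq[OF A])
  have nzA: "Ar $$ (a,0) \<noteq> 0" unfolding Ar_def using a A n by auto
  have nzZ: "Zr $$ (a,0) \<noteq> 0" unfolding Zr_def using a A n by (simp add: AZ_def)
  have "cond_num Zr \<le> sqrt (2 * (real n + 1)) * cond_num Ar"
    by (rule main_real[OF Ar a(1) n nzA Z nzZ])
  also have "\<dots> \<le> (2 * real n powr (3/2)) * cond_num Ar"
    by (rule mult_right_mono[OF const_bound[OF n] cond_nonneg[OF Ar sv_nonempty[OF Ar a(1) n nzA]]])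
  finally show "cond_num (map_mat real_of_int (AZ A)) \<le> 2 * real n powr (3/2) * cond_num (map_mat real_of_int A)"
    unfolding Zr_def Ar_def .
qed

end
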